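(* Let $b\in C^1([0,\infty))$ satisfy $b(t)>0$ for all $t\ge0$ and $\limsup_{t\to\infty}\frac{|b'(t)|}{b(t)^2}<1$. Then $$B_0:=\int_0^\infty\exp\Big(-\int_0^sb(\sigma)\,d\sigma\Big)\,ds<\infty\quad\text{and}\quad \lim_{t\to\infty}\frac{1}{b(t)}\exp\Big(-\int_0^tb(\sigma)\,d\sigma\Big)=0.$$ Assume further that $1/b\notin L^1(0,\infty)$ and that there exist $\gamma>0$ and $C>0$ with $\frac{|b'(t)|}{b(t)^2}\le C(t+1)^{-\gamma}$ for $t>0$. Then $$\lim_{t\to\infty}\frac{1}{b(t)^2(B(t)+1)}=0,\qquad\text{where } B(t)=\int_0^t\frac{d\sigma}{b(\sigma)}.$$ *)

theory Defs
  imports "HOL-Analysis.Analysis"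
begin

end

theory Submission imports Defs begin

lemma within_eq: "(x::real) \<ge> 0 \<Longrightarrow> at x within {0..} = at x within {0..x+1}"
  by (rule at_within_nhd[of _ "{..<x+1}"]) auto

lemma at_from_within:
  assumes "(f has_real_derivative D) (at x within {0..})" "(x::real) > 0"
  shows "(f has_real_derivative D) (at x)"
proof -
  have "at x within {0..} = at x" using assms(2) by (intro at_within_interior) auto
  then show ?thesis using assms(1) by simp
qed

lemma int_deriv_within:
  fixes f :: "real \<Rightarrow> real"
  assumes "continuous_on {0..} f" "x \<ge> 0"
  shows "((\<lambda>u. integral {0..u} f) has_real_derivative f x) (at x within {0..})"
proof -
  have "continuous_on {0..x+1} f" using assms(1) by (rule continuous_on_subset) auto
  then have "((\<lambda>u. integral {0..u} f) has_real_derivative f x) (at x within {0..x+1})"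
    using assms(2) by (intro integral_has_real_derivative) auto
  then show ?thesis using within_eq[OF assms(2)] by simp
qed

lemma decr:
  fixes f f' :: "real \<Rightarrow> real"
  assumes "a \<le> c" "\<And>x. a < x \<Longrightarrow> x < c \<Longrightarrow> (f has_real_derivative f' x) (at x)"
    "\<And>x. a < x \<Longrightarrow> x < c \<Longrightarrow> f' x \<le> 0" "continuous_on {a..c} f"
  shows "f c \<le> f a"
  using DERIV_nonpos_imp_decreasing_open[of a c f] assms by blast

lemma bounded_int:
  fixes f :: "real \<Rightarrow> real"
  assumes cont: "continuous_on {0..} f" and nn: "\<And>t. t \<ge> 0 \<Longrightarrow> 0 \<le> f t"
    and bd: "\<And>t. t \<ge> 0 \<Longrightarrow> integral {0..t} f \<le> M"
  shows "f integrable_on {0..}"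
proof -
  define fk where "fk = (\<lambda>k::nat. \<lambda>x. if x \<in> {0..real k} then f x else 0)"
  define g where "g = (\<lambda>x. if x \<in> {0::real..} then f x else 0)"
  have intk: "f integrable_on {0..real k}" for k
    by (rule integrable_continuous_interval, rule continuous_on_subset[OF cont]) auto
  have "g integrable_on UNIV \<and> ((\<lambda>k. integral UNIV (fk k)) \<longlonglongrightarrow> integral UNIV g)"
  proof (rule monotone_convergence_increasing)
    show "fk k integrable_on UNIV" for k
      unfolding fk_def using intk integrable_restrict_UNIV by blast
    show "fk k x \<le> fk (Suc k) x" for k x
      unfolding fk_def using nn by auto
    show "(\<lambda>k. fk k x) \<longlonglongrightarrow> g x" for x
    proof (rule tendsto_eventually)
      obtain N :: nat where "x \<le> real N" using real_arch_simple by blast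
      then have "\<forall>k\<ge>N. fk k x = g x" unfolding fk_def g_def
        by (auto simp: order_trans[OF _ of_nat_mono])
      then show "\<forall>\<^sub>F k in sequentially. fk k x = g x" 
        unfolding eventually_sequentially by blast
    qed
    have "integral UNIV (fk k) = integral {0..real k} f" for k
      unfolding fk_def by (rule integral_restrict_UNIV)
    moreover have "0 \<le> integral {0..real k} f" for k
      using intk nn by (intro integral_nonneg) auto
    ultimately show "bounded (range (\<lambda>k. integral UNIV (fk k)))"
      unfolding bounded_real using bd by (intro exI[of _ M]) auto
  qed
  then show ?thesis unfolding g_def using integrable_restrict_UNIV by blast
qed

theorem lemma2p1:
  fixes b b' :: "real \<Rightarrow> real"
  assumes deriv: "\<And>t. t \<ge> 0 \<Longrightarrow> (b has_real_derivative b' t) (at t within {0..})"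
    and cont_deriv: "continuous_on {0..} b'"
    and pos: "\<And>t. t \<ge> 0 \<Longrightarrow> b t > 0"
    and limsup: "Limsup at_top (\<lambda>t. ereal (\<bar>b' t\<bar> / (b t)\<^sup>2)) < 1"
  shows "(\<lambda>s. exp (- integral {0..s} b)) integrable_on {0..}
       \<and> ((\<lambda>t. exp (- integral {0..t} b) / b t) \<longlongrightarrow> 0) at_top
       \<and> ((\<not> (\<lambda>t. 1 / b t) integrable_on {0..}
            \<and> (\<exists>\<gamma>>0. \<exists>C>0. \<forall>t>0. \<bar>b' t\<bar> / (b t)\<^sup>2 \<le> C * (t + 1) powr (- \<gamma>)))
          \<longrightarrow> ((\<lambda>t. 1 / ((b t)\<^sup>2 * (integral {0..t} (\<lambda>\<sigma>. 1 / b \<sigma>) + 1))) \<longlongrightarrow> 0) at_top)"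
proof -
  have contb: "continuous_on {0..} b"
    using deriv by (intro DERIV_continuous_on) auto
  have db: "(b has_real_derivative b' x) (at x)" if "x > 0" for x
    using deriv[of x] that by (intro at_from_within) auto
  define F where "F = (\<lambda>t. integral {0..t} b)"
  define E where "E = (\<lambda>t. exp (- F t))"
  define g where "g = (\<lambda>t. E t / b t)"
  define IE where "IE = (\<lambda>t. integral {0..t} E)"
  have dFw: "(F has_real_derivative b x) (at x within {0..})" if "x \<ge> 0" for x
    unfolding F_def using int_deriv_within[OF contb that] .
  have contF: "continuous_on {0..} F" using dFw by (intro DERIV_continuous_on) auto
  have dF: "(F has_real_derivative b x) (at x)" if "x > 0" for x
    using dFw[of x] that by (intro at_from_within) auto
  have contE: "continuous_on {0..} E" unfolding E_def
    by (intro continuous_intros contF)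
  have Epos: "E t > 0" for t unfolding E_def by simp
  have dE: "(E has_real_derivative (- b x * E x)) (at x)" if "x > 0" for x
    unfolding E_def by (rule derivative_eq_intros dF[OF that] refl | simp)+
  have dIEw: "(IE has_real_derivative E x) (at x within {0..})" if "x \<ge> 0" for x
    unfolding IE_def using int_deriv_within[OF contE that] .
  have contIE: "continuous_on {0..} IE" using dIEw by (intro DERIV_continuous_on) auto
  have dIE: "(IE has_real_derivative E x) (at x)" if "x > 0" for x
    using dIEw[of x] that by (intro at_from_within) auto
  have dg: "(g has_real_derivative (- E x - E x * b' x / (b x)\<^sup>2)) (at x)" if "x > 0" for x
  proof -
    have "(g has_real_derivative ((- b x * E x) * b x - E x * b' x) / (b x * b x)) (at x)"
      unfolding g_def using pos[of x] that by (intro DERIV_divide dE db) auto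
    moreover have "((- b x * E x) * b x - E x * b' x) / (b x * b x) = - E x - E x * b' x / (b x)\<^sup>2"
      using pos[of x] that by (simp add: field_simps power2_eq_square)
    ultimately show ?thesis by simp
  qed
  have contg: "continuous_on {0..} g" unfolding g_def using pos
    by (intro continuous_intros contE contb) (auto simp: less_imp_neq[symmetric])
  have IEnn: "IE t \<ge> 0" if "t \<ge> 0" for t
    unfolding IE_def using Epos that
    by (intro integral_nonneg integrable_continuous_interval continuous_on_subset[OF contE])
       (auto simp: less_imp_le)
  obtain q where q1: "Limsup at_top (\<lambda>t. ereal (\<bar>b' t\<bar> / (b t)\<^sup>2)) < ereal q" and q2: "ereal q < 1"
    using ereal_dense2[OF limsup] by blast
  have "\<forall>\<^sub>F t in at_top. ereal (\<bar>b' t\<bar> / (b t)\<^sup>2) < ereal q"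
    using Limsup_lessD[OF q1] .
  then obtain T0 where T0: "\<And>t. t \<ge> T0 \<Longrightarrow> \<bar>b' t\<bar> / (b t)\<^sup>2 < q"
    unfolding eventually_at_top_linorder by auto
  define T where "T = max T0 1"
  have T1: "T \<ge> 1" and Tq: "\<And>t. t \<ge> T \<Longrightarrow> \<bar>b' t\<bar> / (b t)\<^sup>2 < q"
    using T0 unfolding T_def by auto
  have q1': "q < 1" using q2 by simp
  have ratio_ge: "b' t / (b t)\<^sup>2 \<ge> - q" if "t \<ge> T" for t
  proof -
    have "- (b' t / (b t)\<^sup>2) \<le> \<bar>b' t\<bar> / (b t)\<^sup>2"
      by (auto simp: divide_le_cancel abs_if)
    then show ?thesis using Tq[OF that] by linarith
  qed
  have gdec: "g t \<le> g s" if "T \<le> s" "s \<le> t" for s t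
  proof (rule decr[of s t g "\<lambda>x. - E x - E x * b' x / (b x)\<^sup>2"])
    fix x assume x: "s < x" "x < t"
    then show "(g has_real_derivative - E x - E x * b' x / (b x)\<^sup>2) (at x)"
      using that T1 by (intro dg) auto
    have "E x * (1 + b' x / (b x)\<^sup>2) \<ge> 0"
      using ratio_ge[of x] x that q1' Epos[of x] by (intro mult_nonneg_nonneg) auto
    then show "- E x - E x * b' x / (b x)\<^sup>2 \<le> 0" by (simp add: algebra_simps)
  qed (use that T1 in \<open>auto intro: continuous_on_subset[OF contg]\<close>)
  define M1 where "M1 = IE T + g T / (1 - q)"
  have gpos: "g t > 0" if "t \<ge> 0" for t unfolding g_def using Epos pos that by auto
  have IEmono: "IE s \<le> IE t" if "0 \<le> s" "s \<le> t" for s t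
  proof -
    have "(\<lambda>x. - IE x) t \<le> (\<lambda>x. - IE x) s"
    proof (rule decr[of s t _ "\<lambda>x. - E x"])
      fix x assume x: "s < x" "x < t"
      then show "((\<lambda>x. - IE x) has_real_derivative - E x) (at x)"
        using that by (intro DERIV_minus dIE) auto
      show "- E x \<le> 0" using Epos[of x] by simp
    qed (use that in \<open>auto intro!: continuous_intros intro: continuous_on_subset[OF contIE]\<close>)
    then show ?thesis by simp
  qed
  have IEbd: "IE t \<le> M1" if "t \<ge> 0" for t
  proof (cases "t \<le> T")
    case True
    have "0 < g T / (1 - q)" using gpos[of T] T1 q1' by simp
    then show ?thesis using IEmono[of t T] that True unfolding M1_def by linarith
  next
    case False
    have "(\<lambda>x. g x + (1 - q) * IE x) t \<le> (\<lambda>x. g x + (1 - q) * IE x) T"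
    proof (rule decr[of T t _ "\<lambda>x. (- E x - E x * b' x / (b x)\<^sup>2) + (1 - q) * E x"])
      fix x assume x: "T < x" "x < t"
      then show "((\<lambda>x. g x + (1 - q) * IE x) has_real_derivative
          (- E x - E x * b' x / (b x)\<^sup>2) + (1 - q) * E x) (at x)"
        using T1 by (intro DERIV_add DERIV_cmult dg dIE) auto
      have "E x * (q + b' x / (b x)\<^sup>2) \<ge> 0"
        using ratio_ge[of x] x Epos[of x] by (intro mult_nonneg_nonneg) auto
      then show "(- E x - E x * b' x / (b x)\<^sup>2) + (1 - q) * E x \<le> 0"
        by (simp add: algebra_simps)
    qed (use False T1 in \<open>auto intro!: continuous_intros intro: continuous_on_subset[OF contIE] continuous_on_subset[OF contg]\<close>)
    then have "(1 - q) * IE t \<le> g T + (1 - q) * IE T" using gpos[of t] that by simp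
    then have "IE t \<le> g T / (1 - q) + IE T" using q1' by (simp add: field_simps)
    then show ?thesis unfolding M1_def by simp
  qed
  have part1: "E integrable_on {0..}"
    using bounded_int[OF contE _ IEbd[unfolded IE_def]] Epos by (auto simp: less_imp_le)
  have part2: "(g \<longlongrightarrow> 0) at_top"
  proof (rule tendstoI)
    fix \<epsilon> :: real assume eps: "\<epsilon> > 0"
    have "\<exists>t0\<ge>T. g t0 < \<epsilon>"
    proof (rule ccontr)
      assume "\<not> ?thesis"
      then have ge: "g t \<ge> \<epsilon>" if "t \<ge> T" for t using that by force
      define K where "K = F T + M1 / \<epsilon>"
      have FK: "F t \<le> K" if "t \<ge> T" for t
      proof -
        have "(\<lambda>x. F x - IE x / \<epsilon>) t \<le> (\<lambda>x. F x - IE x / \<epsilon>) T"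
        proof (rule decr[of T t _ "\<lambda>x. b x - E x / \<epsilon>"])
          fix x assume x: "T < x" "x < t"
          then show "((\<lambda>x. F x - IE x / \<epsilon>) has_real_derivative b x - E x / \<epsilon>) (at x)"
            using T1 by (intro DERIV_diff DERIV_cdivide dF dIE) auto
          have "\<epsilon> \<le> E x / b x" using ge[of x] x unfolding g_def by auto
          then have "\<epsilon> * b x \<le> E x" using pos[of x] x T1 by (simp add: field_simps)
          then show "b x - E x / \<epsilon> \<le> 0" using eps by (simp add: field_simps)
        qed (use that T1 eps in \<open>auto intro!: continuous_intros intro: continuous_on_subset[OF contIE] continuous_on_subset[OF contF]\<close>)
        then have "F t \<le> F T + (IE t - IE T) / \<epsilon>" by (simp add: diff_divide_distrib)
        moreover have "(IE t - IE T) / \<epsilon> \<le> M1 / \<epsilon>"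
          using IEbd[of t] IEnn[of T] that T1 eps by (intro divide_right_mono) auto
        ultimately show ?thesis unfolding K_def by simp
      qed
      define c where "c = exp (- K)"
      have cpos: "c > 0" unfolding c_def by simp
      have Ec: "E t \<ge> c" if "t \<ge> T" for t
        unfolding E_def c_def using FK[OF that] by simp
      define t1 where "t1 = T + (M1 + 1) / c"
      have M1nn: "M1 \<ge> 0" using IEbd[of 0] IEnn[of 0] by simp
      have t1T: "t1 \<ge> T" unfolding t1_def using M1nn cpos by simp
      have "(\<lambda>x. IE x - c * x) T \<le> (\<lambda>x. IE x - c * x) t1"
      proof -
        have "(\<lambda>x. c * x - IE x) t1 \<le> (\<lambda>x. c * x - IE x) T"
        proof (rule decr[of T t1 _ "\<lambda>x. c - E x"])
          fix x assume x: "T < x" "x < t1"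
          then show "((\<lambda>x. c * x - IE x) has_real_derivative c - E x) (at x)"
            using T1 by (auto intro!: derivative_eq_intros dIE)
          show "c - E x \<le> 0" using Ec[of x] x by simp
        qed (use t1T T1 in \<open>auto intro!: continuous_intros intro: continuous_on_subset[OF contIE]\<close>)
        then show ?thesis by simp
      qed
      then have "IE t1 \<ge> IE T + c * (t1 - T)" by (simp add: algebra_simps)
      also have "c * (t1 - T) = M1 + 1" unfolding t1_def using cpos by simp
      finally have "IE t1 \<ge> M1 + 1" using IEnn[of T] T1 by simp
      then show False using IEbd[of t1] t1T T1 by simp
    qed
    then obtain t0 where t0: "t0 \<ge> T" "g t0 < \<epsilon>" by blast
    have "dist (g t) 0 < \<epsilon>" if "t \<ge> t0" for t
      using gdec[of t0 t] gpos[of t] that t0 T1 by auto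
    then show "\<forall>\<^sub>F t in at_top. dist (g t) 0 < \<epsilon>"
      unfolding eventually_at_top_linorder by blast
  qed
  have part3: "((\<lambda>t. 1 / ((b t)\<^sup>2 * (integral {0..t} (\<lambda>\<sigma>. 1 / b \<sigma>) + 1))) \<longlongrightarrow> 0) at_top"
    if nint: "\<not> (\<lambda>t. 1 / b t) integrable_on {0..}"
      and hypC: "\<exists>\<gamma>>0. \<exists>C>0. \<forall>t>0. \<bar>b' t\<bar> / (b t)\<^sup>2 \<le> C * (t + 1) powr (- \<gamma>)"
  proof -
    obtain \<gamma> C where gam: "\<gamma> > 0" and Cpos: "C > 0"
      and bdC: "\<And>t. t > 0 \<Longrightarrow> \<bar>b' t\<bar> / (b t)\<^sup>2 \<le> C * (t + 1) powr (- \<gamma>)"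
      using hypC by blast
    define h where "h = (\<lambda>t. 1 / b t)"
    define B where "B = (\<lambda>t. integral {0..t} h)"
    have conth: "continuous_on {0..} h" unfolding h_def using pos
      by (intro continuous_intros contb) (auto simp: less_imp_neq[symmetric])
    have hpos: "h t > 0" if "t \<ge> 0" for t unfolding h_def using pos that by simp
    have dBw: "(B has_real_derivative h x) (at x within {0..})" if "x \<ge> 0" for x
      unfolding B_def using int_deriv_within[OF conth that] .
    have contB: "continuous_on {0..} B" using dBw by (intro DERIV_continuous_on) auto
    have dB: "(B has_real_derivative h x) (at x)" if "x > 0" for x
      using dBw[of x] that by (intro at_from_within) auto
    have dh: "(h has_real_derivative (- b' x / (b x)\<^sup>2)) (at x)" if "x > 0" for x
    proof -
      have "(h has_real_derivative (0 * b x - 1 * b' x) / (b x * b x)) (at x)"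
        unfolding h_def using pos[of x] that by (intro DERIV_divide db DERIV_const) auto
      then show ?thesis by (simp add: power2_eq_square)
    qed
    have Bmono: "B s \<le> B t" if "0 \<le> s" "s \<le> t" for s t
    proof -
      have "(\<lambda>x. - B x) t \<le> (\<lambda>x. - B x) s"
      proof (rule decr[of s t _ "\<lambda>x. - h x"])
        fix x assume x: "s < x" "x < t"
        then show "((\<lambda>x. - B x) has_real_derivative - h x) (at x)"
          using that by (intro DERIV_minus dB) auto
        show "- h x \<le> 0" using hpos[of x] x that by simp
      qed (use that in \<open>auto intro!: continuous_intros intro: continuous_on_subset[OF contB]\<close>)
      then show ?thesis by simp
    qed
    have Bnn: "B t \<ge> 0" if "t \<ge> 0" for t
      using Bmono[of 0 t] that unfolding B_def by simp
    have Bunb: "\<exists>t\<ge>0. B t > K" for K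
    proof (rule ccontr)
      assume "\<not> ?thesis"
      then have "\<And>t. t \<ge> 0 \<Longrightarrow> integral {0..t} h \<le> K" unfolding B_def by force
      then have "h integrable_on {0..}"
        using bounded_int[OF conth] hpos by (meson less_imp_le)
      then show False using nint unfolding h_def by simp
    qed
    have lim0: "((\<lambda>t. (t + 1) powr (- \<gamma>)) \<longlongrightarrow> 0) at_top"
    proof -
      have "LIM t at_top. 1 + t :> (at_top :: real filter)"
        by (rule filterlim_tendsto_add_at_top[OF tendsto_const filterlim_ident])
      then have "LIM t at_top. t + 1 :> (at_top :: real filter)" by (simp add: add.commute)
      then show ?thesis using gam by (intro tendsto_neg_powr) auto
    qed
    show ?thesis
    proof (rule tendstoI)
      fix \<epsilon> :: real assume eps: "\<epsilon> > 0"
      define \<eta> where "\<eta> = \<epsilon> / 4"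
      have etapos: "\<eta> > 0" unfolding \<eta>_def using eps by simp
      have "\<forall>\<^sub>F t in at_top. (t + 1) powr (- \<gamma>) < \<eta> / C"
        using order_tendstoD(2)[OF lim0] etapos Cpos by simp
      then obtain S0 where S0: "\<And>t. t \<ge> S0 \<Longrightarrow> (t + 1) powr (- \<gamma>) < \<eta> / C"
        unfolding eventually_at_top_linorder by blast
      define S where "S = max S0 1"
      have S1: "S \<ge> 1" unfolding S_def by simp
      have ratio: "\<bar>b' t\<bar> / (b t)\<^sup>2 \<le> \<eta>" if "t \<ge> S" for t
      proof -
        have "C * (t + 1) powr (- \<gamma>) \<le> C * (\<eta> / C)"
          using S0[of t] that Cpos unfolding S_def by (intro mult_left_mono) auto
        then show ?thesis using bdC[of t] that S1 Cpos by simp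
      qed
      have hsq: "(h t)\<^sup>2 \<le> (h S)\<^sup>2 + 2 * \<eta> * B t" if "t \<ge> S" for t
      proof -
        have "(\<lambda>x. (h x)\<^sup>2 - 2 * \<eta> * B x) t \<le> (\<lambda>x. (h x)\<^sup>2 - 2 * \<eta> * B x) S"
        proof (rule decr[of S t _ "\<lambda>x. 2 * h x * (- b' x / (b x)\<^sup>2) - 2 * \<eta> * h x"])
          fix x assume x: "S < x" "x < t"
          then show "((\<lambda>x. (h x)\<^sup>2 - 2 * \<eta> * B x) has_real_derivative
              2 * h x * (- b' x / (b x)\<^sup>2) - 2 * \<eta> * h x) (at x)"
            using S1 by (auto intro!: derivative_eq_intros dh dB)
          have "- b' x / (b x)\<^sup>2 \<le> \<bar>b' x\<bar> / (b x)\<^sup>2"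
            by (auto simp: divide_le_cancel abs_if)
          also have "\<dots> \<le> \<eta>" using ratio[of x] x by simp
          finally have "h x * (- b' x / (b x)\<^sup>2) \<le> h x * \<eta>"
            using hpos[of x] x S1 by (intro mult_left_mono) auto
          then show "2 * h x * (- b' x / (b x)\<^sup>2) - 2 * \<eta> * h x \<le> 0"
          proof -
            have "2 * h x * (- b' x / (b x)\<^sup>2) - 2 * \<eta> * h x
                = 2 * (h x * (- b' x / (b x)\<^sup>2) - h x * \<eta>)" by (simp add: algebra_simps)
            then show ?thesis using \<open>h x * (- b' x / (b x)\<^sup>2) \<le> h x * \<eta>\<close> by (smt (verit))
          qed
        qed (use that S1 in \<open>auto intro!: continuous_intros intro: continuous_on_subset[OF contB] continuous_on_subset[OF conth]\<close>)
        moreover have "\<eta> * B S \<ge> 0" using Bnn[of S] S1 etapos by simp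
        ultimately show ?thesis by linarith
      qed
      obtain t1 where t1: "t1 \<ge> 0" "B t1 > 2 * (h S)\<^sup>2 / \<epsilon>" using Bunb by blast
      have "dist (1 / ((b t)\<^sup>2 * (integral {0..t} (\<lambda>\<sigma>. 1 / b \<sigma>) + 1))) 0 < \<epsilon>"
        if t: "t \<ge> max S t1" for t
      proof -
        have t0: "t \<ge> 0" using t S1 by simp
        have Bt: "B t \<ge> B t1" using Bmono[of t1 t] t t1 by simp
        have eq: "1 / ((b t)\<^sup>2 * (integral {0..t} (\<lambda>\<sigma>. 1 / b \<sigma>) + 1)) = (h t)\<^sup>2 / (B t + 1)"
          unfolding B_def h_def by (simp add: power2_eq_square)
        have Bp: "B t + 1 > 0" using Bnn[OF t0] by simp
        have "(h t)\<^sup>2 / (B t + 1) \<le> ((h S)\<^sup>2 + 2 * \<eta> * B t) / (B t + 1)"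
          using hsq[of t] t Bp by (intro divide_right_mono) auto
        also have "\<dots> = (h S)\<^sup>2 / (B t + 1) + 2 * \<eta> * (B t / (B t + 1))"
          by (simp add: add_divide_distrib)
        also have "(h S)\<^sup>2 / (B t + 1) < \<epsilon> / 2"
        proof -
          have "2 * (h S)\<^sup>2 / \<epsilon> < B t + 1" using t1 Bt by simp
          then have "2 * (h S)\<^sup>2 < \<epsilon> * (B t + 1)" using eps by (simp add: field_simps)
          then show ?thesis using Bp by (simp add: field_simps)
        qed
        also have "2 * \<eta> * (B t / (B t + 1)) \<le> 2 * \<eta> * 1"
          using Bp etapos by (intro mult_left_mono) auto
        finally have "(h t)\<^sup>2 / (B t + 1) < \<epsilon>" unfolding \<eta>_def by simp
        moreover have "(h t)\<^sup>2 / (B t + 1) \<ge> 0" using Bp by simp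
        ultimately show ?thesis unfolding eq using Bp by simp
      qed
      then show "\<forall>\<^sub>F t in at_top. dist (1 / ((b t)\<^sup>2 * (integral {0..t} (\<lambda>\<sigma>. 1 / b \<sigma>) + 1))) 0 < \<epsilon>"
        unfolding eventually_at_top_linorder by blast
    qed
  qed
  show ?thesis using part1 part2 part3 unfolding E_def F_def g_def by blast
qed
end
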